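(* Let $H$ be a finite graph of girth at least $5$ and minimum degree at least $4$. Then for every $t\in\mathbb N$, every proper layered wheel $W$ of girth at least $5$ contains an $H$-free induced subgraph of treewidth at least $t$.
   Context: A layered wheel is a countably infinite graph $W$ on the same vertex set as a countably infinite, locally finite rooted tree $T$ embedded in the plane, such that: (1) for every natural number $n$, the set $L_n$ (layer) of nodes at distance $n$ from the root induces in $W$ a finite path visiting $L_n$ in the left-to-right order of the embedding; edges inside layers form the set $E_L$; (2) every edge not in $E_L$ joins two nodes in ancestor–descendant relation in $T$; (3) there is a finite bound on the length of paths in $T$ consisting only of degree-$2$ nodes of $T$. $W$ is proper if for every $i\neq j$ there is at least one edge of $W$ between $L_i$ and $L_j$. A graph is $H$-free if no induced subgraph is isomorphic to $H$. The girth is the length of a shortest cycle. *)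

theory Defs
  imports Main "HOL-Library.Countable_Set"
begin

definition graph :: "'a set \<Rightarrow> ('a \<Rightarrow> 'a \<Rightarrow> bool) \<Rightarrow> bool" where
  "graph V E \<longleftrightarrow> (\<forall>u v. E u v \<longrightarrow> u \<in> V \<and> v \<in> V \<and> u \<noteq> v \<and> E v u)"

definition is_cycle :: "('a \<Rightarrow> 'a \<Rightarrow> bool) \<Rightarrow> 'a list \<Rightarrow> bool" where
  "is_cycle E xs \<longleftrightarrow> 3 \<le> length xs \<and> distinct xs \<and> successively E xs \<and> E (last xs) (hd xs)"

definition girth_at_least :: "('a \<Rightarrow> 'a \<Rightarrow> bool) \<Rightarrow> nat \<Rightarrow> bool" where
  "girth_at_least E g \<longleftrightarrow> (\<forall>xs. is_cycle E xs \<longrightarrow> g \<le> length xs)"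

definition connected_on :: "('a \<Rightarrow> 'a \<Rightarrow> bool) \<Rightarrow> 'a set \<Rightarrow> bool" where
  "connected_on E X \<longleftrightarrow> (\<forall>x\<in>X. \<forall>y\<in>X. \<exists>xs. xs \<noteq> [] \<and> hd xs = x \<and> last xs = y
      \<and> set xs \<subseteq> X \<and> successively E xs)"

definition min_degree_at_least :: "'a set \<Rightarrow> ('a \<Rightarrow> 'a \<Rightarrow> bool) \<Rightarrow> nat \<Rightarrow> bool" where
  "min_degree_at_least V E d \<longleftrightarrow> (\<forall>v\<in>V. d \<le> card {u\<in>V. E v u})"

definition induced_copy :: "'b set \<Rightarrow> ('b \<Rightarrow> 'b \<Rightarrow> bool) \<Rightarrow> 'a set \<Rightarrow> ('a \<Rightarrow> 'a \<Rightarrow> bool) \<Rightarrow> bool" where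
  "induced_copy VH EH S E \<longleftrightarrow> (\<exists>f. inj_on f VH \<and> f ` VH \<subseteq> S \<and>
      (\<forall>a\<in>VH. \<forall>b\<in>VH. EH a b \<longleftrightarrow> E (f a) (f b)))"

definition H_free :: "'b set \<Rightarrow> ('b \<Rightarrow> 'b \<Rightarrow> bool) \<Rightarrow> 'a set \<Rightarrow> ('a \<Rightarrow> 'a \<Rightarrow> bool) \<Rightarrow> bool" where
  "H_free VH EH S E \<longleftrightarrow> \<not> induced_copy VH EH S E"

text \<open>The decomposition tree has nodes N (a finite set of naturals) and edge relation TE.
  The graph considered is the one induced by E on V.\<close>
definition tree_decomp :: "'a set \<Rightarrow> ('a \<Rightarrow> 'a \<Rightarrow> bool) \<Rightarrow> nat set \<Rightarrow> (nat \<Rightarrow> nat \<Rightarrow> bool)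
    \<Rightarrow> (nat \<Rightarrow> 'a set) \<Rightarrow> bool" where
  "tree_decomp V E N TE B \<longleftrightarrow>
     finite N \<and> N \<noteq> {} \<and> graph N TE \<and> connected_on TE N \<and> (\<forall>xs. \<not> is_cycle TE xs) \<and>
     (\<forall>x\<in>N. B x \<subseteq> V) \<and>
     (\<forall>v\<in>V. \<exists>x\<in>N. v \<in> B x) \<and>
     (\<forall>u\<in>V. \<forall>v\<in>V. E u v \<longrightarrow> (\<exists>x\<in>N. u \<in> B x \<and> v \<in> B x)) \<and>
     (\<forall>v\<in>V. connected_on TE {x\<in>N. v \<in> B x})"

definition treewidth :: "'a set \<Rightarrow> ('a \<Rightarrow> 'a \<Rightarrow> bool) \<Rightarrow> nat" where
  "treewidth V E = (LEAST k. \<exists>N TE B. tree_decomp V E N TE B \<and> (\<forall>x\<in>N. card (B x) \<le> k + 1))"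

definition rooted_tree :: "'a set \<Rightarrow> 'a \<Rightarrow> ('a \<Rightarrow> 'a) \<Rightarrow> bool" where
  "rooted_tree V r par \<longleftrightarrow> r \<in> V \<and> par r = r \<and> (\<forall>v\<in>V. par v \<in> V) \<and>
     (\<forall>v\<in>V. \<exists>n. (par ^^ n) v = r)"

definition depth :: "'a \<Rightarrow> ('a \<Rightarrow> 'a) \<Rightarrow> 'a \<Rightarrow> nat" where
  "depth r par v = (LEAST n. (par ^^ n) v = r)"

definition layer :: "'a set \<Rightarrow> 'a \<Rightarrow> ('a \<Rightarrow> 'a) \<Rightarrow> nat \<Rightarrow> 'a set" where
  "layer V r par n = {v\<in>V. depth r par v = n}"

definition tadj :: "'a \<Rightarrow> ('a \<Rightarrow> 'a) \<Rightarrow> 'a \<Rightarrow> 'a \<Rightarrow> bool" where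
  "tadj r par u v \<longleftrightarrow> (u \<noteq> r \<and> par u = v) \<or> (v \<noteq> r \<and> par v = u)"

definition tdeg :: "'a set \<Rightarrow> 'a \<Rightarrow> ('a \<Rightarrow> 'a) \<Rightarrow> 'a \<Rightarrow> nat" where
  "tdeg V r par v = card {u\<in>V. tadj r par v u}"

definition ancestor :: "('a \<Rightarrow> 'a) \<Rightarrow> 'a \<Rightarrow> 'a \<Rightarrow> bool" where
  "ancestor par u v \<longleftrightarrow> (\<exists>k. (par ^^ k) v = u)"

text \<open>A plane embedding of the rooted tree, recorded through the induced left-to-right
  orders: lt is a strict linear order on each layer, and children of different parents
  are ordered as their parents are.\<close>
definition plane_order :: "'a set \<Rightarrow> 'a \<Rightarrow> ('a \<Rightarrow> 'a) \<Rightarrow> ('a \<Rightarrow> 'a \<Rightarrow> bool) \<Rightarrow> bool" where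
  "plane_order V r par lt \<longleftrightarrow>
     (\<forall>n. (\<forall>u\<in>layer V r par n. \<not> lt u u) \<and>
          (\<forall>u\<in>layer V r par n. \<forall>v\<in>layer V r par n. \<forall>w\<in>layer V r par n.
              lt u v \<longrightarrow> lt v w \<longrightarrow> lt u w) \<and>
          (\<forall>u\<in>layer V r par n. \<forall>v\<in>layer V r par n. u = v \<or> lt u v \<or> lt v u)) \<and>
     (\<forall>n. \<forall>u\<in>layer V r par (Suc n). \<forall>v\<in>layer V r par (Suc n).
          par u \<noteq> par v \<longrightarrow> lt u v \<longrightarrow> lt (par u) (par v))"

definition consecutive :: "('a \<Rightarrow> 'a \<Rightarrow> bool) \<Rightarrow> 'a set \<Rightarrow> 'a \<Rightarrow> 'a \<Rightarrow> bool" where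
  "consecutive lt L u v \<longleftrightarrow> lt u v \<and> \<not> (\<exists>w\<in>L. lt u w \<and> lt w v)"

definition layered_wheel :: "'a set \<Rightarrow> ('a \<Rightarrow> 'a \<Rightarrow> bool) \<Rightarrow> 'a \<Rightarrow> ('a \<Rightarrow> 'a)
    \<Rightarrow> ('a \<Rightarrow> 'a \<Rightarrow> bool) \<Rightarrow> bool" where
  "layered_wheel V E r par lt \<longleftrightarrow>
     graph V E \<and> rooted_tree V r par \<and> infinite V \<and> countable V \<and>
     (\<forall>v\<in>V. finite {u\<in>V. tadj r par v u}) \<and>
     plane_order V r par lt \<and>
     (\<forall>n. finite (layer V r par n) \<and>
        (\<forall>u\<in>layer V r par n. \<forall>v\<in>layer V r par n.
           E u v \<longleftrightarrow> consecutive lt (layer V r par n) u v \<or> consecutive lt (layer V r par n) v u)) \<and>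
     (\<forall>u v. E u v \<and> depth r par u \<noteq> depth r par v \<longrightarrow> ancestor par u v \<or> ancestor par v u) \<and>
     (\<exists>b. \<forall>xs. distinct xs \<and> set xs \<subseteq> V \<and> successively (tadj r par) xs \<and>
          (\<forall>x\<in>set xs. tdeg V r par x = 2) \<longrightarrow> length xs \<le> b)"

definition proper_lw :: "'a set \<Rightarrow> ('a \<Rightarrow> 'a \<Rightarrow> bool) \<Rightarrow> 'a \<Rightarrow> ('a \<Rightarrow> 'a) \<Rightarrow> bool" where
  "proper_lw V E r par \<longleftrightarrow>
     (\<forall>i j. i \<noteq> j \<longrightarrow> (\<exists>u\<in>layer V r par i. \<exists>v\<in>layer V r par j. E u v))"

end

theory Submission
  imports Defs
begin


definition cR :: "('a \<Rightarrow> 'a \<Rightarrow> bool) \<Rightarrow> 'a set \<Rightarrow> 'a \<Rightarrow> 'a \<Rightarrow> bool" where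
  "cR E X a b \<longleftrightarrow> a \<in> X \<and> b \<in> X \<and> E a b"

lemma path_rtc:
  "successively E xs \<Longrightarrow> set xs \<subseteq> X \<Longrightarrow> xs \<noteq> [] \<Longrightarrow> (cR E X)\<^sup>*\<^sup>* (hd xs) (last xs)"
proof (induction xs)
  case Nil then show ?case by simp
next
  case (Cons a xs)
  show ?case
  proof (cases "xs = []")
    case True then show ?thesis by simp
  next
    case False
    with Cons have "E a (hd xs)" "successively E xs" by (auto simp: successively_Cons)
    moreover have "hd xs \<in> X" using Cons.prems False by (cases xs) auto
    ultimately have "cR E X a (hd xs)" using Cons.prems unfolding cR_def by auto
    moreover have "(cR E X)\<^sup>*\<^sup>* (hd xs) (last xs)" using Cons False \<open>successively E xs\<close> by auto
    ultimately show ?thesis using False by (simp add: converse_rtranclp_into_rtranclp)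
  qed
qed

lemma rtc_path:
  assumes "(cR E X)\<^sup>*\<^sup>* a b" "a \<in> X"
  shows "\<exists>xs. xs \<noteq> [] \<and> hd xs = a \<and> last xs = b \<and> set xs \<subseteq> X \<and> successively E xs"
  using assms
proof (induction rule: converse_rtranclp_induct)
  case base
  then show ?case by (intro exI[of _ "[b]"]) auto
next
  case (step y z)
  then have "z \<in> X" "E y z" "y \<in> X" by (auto simp: cR_def)
  with step obtain xs where xs: "xs \<noteq> [] \<and> hd xs = z \<and> last xs = b \<and> set xs \<subseteq> X \<and> successively E xs" by auto
  show ?case using xs \<open>E y z\<close> \<open>y \<in> X\<close>
    by (intro exI[of _ "y # xs"]) (auto simp: successively_Cons)
qed

lemma conn_iff: "connected_on E X \<longleftrightarrow> (\<forall>x\<in>X. \<forall>y\<in>X. (cR E X)\<^sup>*\<^sup>* x y)"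
  unfolding connected_on_def
  using path_rtc rtc_path by metis

lemma cR_mono: "(cR E X)\<^sup>*\<^sup>* a b \<Longrightarrow> X \<subseteq> Y \<Longrightarrow> (cR E Y)\<^sup>*\<^sup>* a b"
  by (erule rtranclp_mono[THEN predicate2D, rotated]) (auto simp: cR_def)

lemma rtc_end: "(cR E X)\<^sup>*\<^sup>* a b \<Longrightarrow> a = b \<or> b \<in> X"
  by (induction rule: rtranclp_induct) (auto simp: cR_def)

lemma leaf_nbr:
  assumes "connected_on TE T" "x \<in> T" "z \<in> T" "z \<noteq> x" "\<forall>w. TE x w \<longrightarrow> w = y"
  shows "y \<in> T"
proof -
  have "(cR TE T)\<^sup>*\<^sup>* x z" using assms conn_iff by metis
  then obtain w where "cR TE T x w" using assms(4) by (metis converse_rtranclpE)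
  then show ?thesis using assms(5) by (auto simp: cR_def)
qed

lemma avoid:
  assumes sym: "\<And>a b. TE a b \<Longrightarrow> TE b a" and irr: "\<And>a. \<not> TE a a"
    and x: "x \<in> X" and y: "y \<in> X" "TE x y" and lf: "\<forall>w. TE x w \<longrightarrow> w = y"
    and a: "a \<in> X" "a \<noteq> x"
    and r: "(cR TE X)\<^sup>*\<^sup>* a b"
  shows "(cR TE (X - {x}))\<^sup>*\<^sup>* a b \<or> (b = x \<and> (cR TE (X - {x}))\<^sup>*\<^sup>* a y)"
  using r
proof (induction rule: rtranclp_induct)
  case base then show ?case by simp
next
  case (step b c)
  have yx: "y \<noteq> x" using y irr by auto
  from step.IH show ?case
  proof
    assume h: "(cR TE (X - {x}))\<^sup>*\<^sup>* a b"
    then have bx: "b \<noteq> x" using rtc_end[OF h] a by auto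
    show ?thesis
    proof (cases "c = x")
      case True
      then have "TE x b" using step.hyps(2) sym by (auto simp: cR_def)
      then have "b = y" using lf by auto
      then show ?thesis using h True by auto
    next
      case False
      then have "cR TE (X - {x}) b c" using step.hyps(2) bx by (auto simp: cR_def)
      then show ?thesis using h by (meson rtranclp.rtrancl_into_rtrancl)
    qed
  next
    assume h: "b = x \<and> (cR TE (X - {x}))\<^sup>*\<^sup>* a y"
    then have "c = y" using step.hyps(2) lf by (auto simp: cR_def)
    then show ?thesis using h by auto
  qed
qed



lemma leaf_exists:
  assumes fin: "finite N" and g: "graph N TE" and c: "connected_on TE N"
    and ac: "\<forall>xs. \<not> is_cycle TE xs" and two: "x0 \<in> N" "x1 \<in> N" "x0 \<noteq> x1"
  shows "\<exists>x y. x \<in> N \<and> TE x y \<and> (\<forall>w. TE x w \<longrightarrow> w = y)"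
proof -
  define P where "P = {xs. distinct xs \<and> set xs \<subseteq> N \<and> xs \<noteq> [] \<and> successively TE xs}"
  have "P \<subseteq> {xs. set xs \<subseteq> N \<and> length xs \<le> card N}"
  proof
    fix ys assume "ys \<in> P"
    then have "distinct ys" "set ys \<subseteq> N" unfolding P_def by auto
    then have "length ys \<le> card N" using distinct_card card_mono[OF fin] by metis
    then show "ys \<in> {xs. set xs \<subseteq> N \<and> length xs \<le> card N}" using \<open>set ys \<subseteq> N\<close> by simp
  qed
  then have finP: "finite P" using finite_lists_length_le[OF fin] finite_subset by blast
  have "[x0] \<in> P" using two unfolding P_def by auto
  then have "P \<noteq> {}" by auto
  define m where "m = Max (length ` P)"
  have "m \<in> length ` P" unfolding m_def using finP \<open>P \<noteq> {}\<close> by simp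
  then obtain xs where xs: "xs \<in> P" "length xs = m" by auto
  have mx: "\<And>ys. ys \<in> P \<Longrightarrow> length ys \<le> length xs"
    using xs finP m_def by (metis Max_ge finite_imageI image_eqI)
  define z where "z = last xs"
  have zN: "z \<in> N" using xs unfolding P_def z_def by auto
  have key: "b = xs ! (length xs - 2) \<and> 2 \<le> length xs" if "TE z b" for b
  proof -
    have bN: "b \<in> N" and bz: "b \<noteq> z" using g that unfolding graph_def by auto
    have bin: "b \<in> set xs"
    proof (rule ccontr)
      assume "b \<notin> set xs"
      then have "xs @ [b] \<in> P" using xs bN that unfolding P_def z_def
        by (auto simp: successively_append_iff)
      then have "length (xs @ [b]) \<le> length xs" by (rule mx)
      then show False by simp
    qed
    then obtain i where i: "i < length xs" "xs ! i = b" by (meson in_set_conv_nth)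
    have "xs \<noteq> []" using xs unfolding P_def by auto
    then have "i \<noteq> length xs - 1" using i bz unfolding z_def by (auto simp: last_conv_nth)
    then have il: "i \<le> length xs - 2" using i by auto
    have len2: "2 \<le> length xs" using il i \<open>i \<noteq> length xs - 1\<close> by linarith
    show ?thesis
    proof (cases "i = length xs - 2")
      case True then show ?thesis using i len2 by simp
    next
      case False
      define ys where "ys = drop i xs"
      have "is_cycle TE ys" unfolding is_cycle_def ys_def
      proof (intro conjI)
        show "3 \<le> length (drop i xs)" using False il len2 by simp
        show "distinct (drop i xs)" using xs unfolding P_def by auto
        show "successively TE (drop i xs)"
        proof -
          have "successively TE xs" using xs unfolding P_def by auto
          then have h: "\<And>j. Suc j < length xs \<Longrightarrow> TE (xs ! j) (xs ! Suc j)"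
            using successively_nth by blast
          show ?thesis unfolding successively_conv_nth
          proof (intro allI impI)
            fix j assume "Suc j < length (drop i xs)"
            then show "TE (drop i xs ! j) (drop i xs ! Suc j)" using h[of "i + j"] by simp
          qed
        qed
        show "TE (last (drop i xs)) (hd (drop i xs))"
          using i that unfolding z_def by (simp add: hd_drop_conv_nth)
      qed
      then show ?thesis using ac by blast
    qed
  qed
  obtain w where "w \<in> N" "w \<noteq> z" using two by blast
  have "(cR TE N)\<^sup>*\<^sup>* z w" using c zN \<open>w \<in> N\<close> conn_iff by metis
  then obtain a where "cR TE N z a" using \<open>w \<noteq> z\<close> by (metis converse_rtranclpE)
  then have "TE z a" by (simp add: cR_def)
  have "\<forall>w. TE z w \<longrightarrow> w = a" using key \<open>TE z a\<close> by metis
  then show ?thesis using zN \<open>TE z a\<close> by blast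
qed



lemma cR_restrict: "cR (\<lambda>a b. TE a b \<and> a \<noteq> x \<and> b \<noteq> x) (X - {x}) = cR TE (X - {x})"
  by (auto simp: cR_def fun_eq_iff)

lemma conn_remove_leaf:
  assumes g: "graph N TE" and c: "connected_on TE X" and XN: "X \<subseteq> N"
    and lf: "TE x y" "\<forall>w. TE x w \<longrightarrow> w = y"
    and ne: "X \<noteq> {x}" "X \<noteq> {}"
  shows "connected_on (\<lambda>a b. TE a b \<and> a \<noteq> x \<and> b \<noteq> x) (X - {x})"
proof (cases "x \<in> X")
  case False
  then have "X - {x} = X" by auto
  then show ?thesis using c unfolding conn_iff cR_restrict by metis
next
  case True
  have sym: "\<And>a b. TE a b \<Longrightarrow> TE b a" and irr: "\<And>a. \<not> TE a a"
    using g unfolding graph_def by auto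
  obtain z where "z \<in> X" "z \<noteq> x" using ne by blast
  then have yX: "y \<in> X" using leaf_nbr[OF c True] lf by blast
  show ?thesis unfolding conn_iff cR_restrict
  proof (intro ballI)
    fix a b assume a: "a \<in> X - {x}" and b: "b \<in> X - {x}"
    have "(cR TE X)\<^sup>*\<^sup>* a b" using c a b unfolding conn_iff by blast
    from avoid[OF sym irr True yX lf(1) lf(2) _ _ this] a b
    show "(cR TE (X - {x}))\<^sup>*\<^sup>* a b" by blast
  qed
qed

lemma helly:
  assumes "finite N" "N \<noteq> {}" "graph N TE" "connected_on TE N" "\<forall>xs. \<not> is_cycle TE xs"
   "\<forall>i\<in>I. T i \<subseteq> N \<and> T i \<noteq> {} \<and> connected_on TE (T i)"
   "\<forall>i\<in>I. \<forall>j\<in>I. T i \<inter> T j \<noteq> {}"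
  shows "\<exists>x\<in>N. \<forall>i\<in>I. x \<in> T i"
  using assms
proof (induction "card N" arbitrary: N TE T rule: less_induct)
  case less
  show ?case
  proof (cases "\<exists>x0. N = {x0}")
    case True
    then obtain x0 where "N = {x0}" by blast
    then show ?thesis using less.prems(6) by blast
  next
    case False
    then obtain x0 x1 where x01: "x0 \<in> N" "x1 \<in> N" "x0 \<noteq> x1" using less.prems(2) by blast
    obtain x y where xy: "x \<in> N" "TE x y" "\<forall>w. TE x w \<longrightarrow> w = y"
      using leaf_exists[OF less.prems(1,3,4,5) x01] by blast
    have yN: "y \<in> N" and yx: "y \<noteq> x" using less.prems(3) xy(2) unfolding graph_def by blast+
    show ?thesis
    proof (cases "\<exists>i\<in>I. T i = {x}")
      case True
      then obtain i where "i \<in> I" "T i = {x}" by blast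
      then have "\<forall>j\<in>I. x \<in> T j" using less.prems(7) by (metis Int_emptyI singletonD)
      then show ?thesis using xy by blast
    next
      case False
      define TE' where "TE' = (\<lambda>a b. TE a b \<and> a \<noteq> x \<and> b \<noteq> x)"
      define N' where "N' = N - {x}"
      define T' where "T' = (\<lambda>i. T i - {x})"
      have "card N' < card N" unfolding N'_def using xy less.prems(1)
        by (meson card_Diff1_less)
      moreover have "finite N'" using less.prems(1) unfolding N'_def by auto
      moreover have "N' \<noteq> {}" using x01 unfolding N'_def by blast
      moreover have "graph N' TE'" using less.prems(3) unfolding graph_def TE'_def N'_def by auto
      moreover have "connected_on TE' N'" unfolding TE'_def N'_def
        using conn_remove_leaf[OF less.prems(3) less.prems(4) _ xy(2,3)] x01 by blast
      moreover have "\<forall>xs. \<not> is_cycle TE' xs"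
      proof (intro allI notI)
        fix xs assume "is_cycle TE' xs"
        then have "is_cycle TE xs" unfolding is_cycle_def TE'_def
          by (auto elim: successively_mono)
        then show False using less.prems(5) by blast
      qed
      moreover have "\<forall>i\<in>I. T' i \<subseteq> N' \<and> T' i \<noteq> {} \<and> connected_on TE' (T' i)"
      proof
        fix i assume i: "i \<in> I"
        have "T i \<noteq> {x}" using False i by blast
        then show "T' i \<subseteq> N' \<and> T' i \<noteq> {} \<and> connected_on TE' (T' i)"
          using less.prems(6) i conn_remove_leaf[OF less.prems(3) _ _ xy(2,3)]
          unfolding T'_def N'_def TE'_def by blast
      qed
      moreover have "\<forall>i\<in>I. \<forall>j\<in>I. T' i \<inter> T' j \<noteq> {}"
      proof (intro ballI)
        fix i j assume i: "i \<in> I" and j: "j \<in> I"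
        show "T' i \<inter> T' j \<noteq> {}"
        proof (cases "\<exists>z. z \<in> T i \<and> z \<in> T j \<and> z \<noteq> x")
          case True then show ?thesis unfolding T'_def by blast
        next
          case nz: False
          then have xi: "x \<in> T i" "x \<in> T j" using less.prems(7) i j by blast+
          have "\<And>k. k \<in> I \<Longrightarrow> x \<in> T k \<Longrightarrow> y \<in> T k"
          proof -
            fix k assume k: "k \<in> I" "x \<in> T k"
            have "T k \<noteq> {x}" using False k by blast
            then obtain z where "z \<in> T k" "z \<noteq> x" using k by blast
            then show "y \<in> T k" using leaf_nbr[of TE "T k" x z y] less.prems(6) k xy by blast
          qed
          then have "y \<in> T i" "y \<in> T j" using xi i j by auto
          then show ?thesis unfolding T'_def using yx by blast
        qed
      qed
      ultimately obtain z where "z \<in> N'" "\<forall>i\<in>I. z \<in> T' i"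
        using less.hyps by blast
      then show ?thesis unfolding N'_def T'_def by blast
    qed
  qed
qed



lemma trivial_decomp:
  "tree_decomp S E {0} (\<lambda>_ _. False) (\<lambda>_. S)"
proof -
  have nc: "\<not> is_cycle (\<lambda>_ _. False) xs" for xs :: "nat list"
    unfolding is_cycle_def by (cases xs rule: remdups_adj.cases) auto
  have c: "connected_on (\<lambda>_ _. False) {0::nat}"
    unfolding connected_on_def by (intro ballI exI[of _ "[0]"]) auto
  have "{x \<in> {0::nat}. v \<in> S} = {0}" if "v \<in> S" for v using that by auto
  then show ?thesis unfolding tree_decomp_def graph_def using nc c by auto
qed

lemma tw_lower:
  fixes C :: "'i \<Rightarrow> 'v set" and S :: "'v set"
  assumes fin: "finite S" and finI: "finite I"
    and CS: "\<forall>i\<in>I. C i \<subseteq> S \<and> C i \<noteq> {} \<and> connected_on E (C i)"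
    and disj: "\<forall>i\<in>I. \<forall>j\<in>I. i \<noteq> j \<longrightarrow> C i \<inter> C j = {}"
    and touch: "\<forall>i\<in>I. \<forall>j\<in>I. i \<noteq> j \<longrightarrow> (\<exists>u\<in>C i. \<exists>v\<in>C j. E u v)"
  shows "card I \<le> treewidth S E + 1"
proof -
  define k where "k = treewidth S E"
  have ex: "\<exists>k N TE B. tree_decomp S E N TE B \<and> (\<forall>x\<in>N. card (B x) \<le> k + 1)"
    using trivial_decomp[of S E] by (intro exI[of _ "card S"] exI[of _ "{0::nat}"] exI[of _ "\<lambda>_ _. False"] exI[of _ "\<lambda>_. S"]) auto
  obtain N TE B where td: "tree_decomp S E N TE B" and bd: "\<forall>x\<in>N. card (B x) \<le> k + 1"
    using LeastI_ex[OF ex] unfolding k_def treewidth_def by blast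
  have finN: "finite N" and neN: "N \<noteq> {}" and gN: "graph N TE" and cN: "connected_on TE N"
    and acN: "\<forall>xs. \<not> is_cycle TE xs" and BS: "\<forall>x\<in>N. B x \<subseteq> S"
    and cov: "\<forall>v\<in>S. \<exists>x\<in>N. v \<in> B x"
    and edg: "\<forall>u\<in>S. \<forall>v\<in>S. E u v \<longrightarrow> (\<exists>x\<in>N. u \<in> B x \<and> v \<in> B x)"
    and sub: "\<forall>v\<in>S. connected_on TE {x\<in>N. v \<in> B x}"
    using td unfolding tree_decomp_def by blast+
  define T where "T = (\<lambda>i. {x\<in>N. B x \<inter> C i \<noteq> {}})"
  have Tconn: "connected_on TE (T i)" if i: "i \<in> I" for i
    unfolding conn_iff
  proof (intro ballI)
    fix x x' assume x: "x \<in> T i" and x': "x' \<in> T i"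
    obtain u where u: "u \<in> B x" "u \<in> C i" using x unfolding T_def by blast
    obtain u' where u': "u' \<in> B x'" "u' \<in> C i" using x' unfolding T_def by blast
    have "(cR E (C i))\<^sup>*\<^sup>* u u'" using CS i u u' unfolding conn_iff by blast
    then have "\<forall>x'. x' \<in> N \<longrightarrow> u' \<in> B x' \<longrightarrow> (cR TE (T i))\<^sup>*\<^sup>* x x'"
    proof (induction rule: rtranclp_induct)
      case base
      show ?case
      proof (intro allI impI)
        fix x' assume "x' \<in> N" "u \<in> B x'"
        have "u \<in> S" using u CS i by blast
        then have "(cR TE {y\<in>N. u \<in> B y})\<^sup>*\<^sup>* x x'"
          using sub \<open>x' \<in> N\<close> \<open>u \<in> B x'\<close> x u unfolding conn_iff T_def by blast
        moreover have "{y\<in>N. u \<in> B y} \<subseteq> T i" using u unfolding T_def by blast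
        ultimately show "(cR TE (T i))\<^sup>*\<^sup>* x x'" using cR_mono by metis
      qed
    next
      case (step w w')
      have w: "w \<in> C i" "w' \<in> C i" "E w w'" using step.hyps(2) unfolding cR_def by auto
      then have "w \<in> S" "w' \<in> S" using CS i by blast+
      then obtain z where z: "z \<in> N" "w \<in> B z" "w' \<in> B z" using edg w by blast
      have xz: "(cR TE (T i))\<^sup>*\<^sup>* x z" using step.IH z by blast
      show ?case
      proof (intro allI impI)
        fix x' assume "x' \<in> N" "w' \<in> B x'"
        then have "(cR TE {y\<in>N. w' \<in> B y})\<^sup>*\<^sup>* z x'"
          using sub \<open>w' \<in> S\<close> z unfolding conn_iff by blast
        moreover have "{y\<in>N. w' \<in> B y} \<subseteq> T i" using w unfolding T_def by blast
        ultimately have "(cR TE (T i))\<^sup>*\<^sup>* z x'" using cR_mono by metis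
        then show "(cR TE (T i))\<^sup>*\<^sup>* x x'" using xz by simp
      qed
    qed
    then show "(cR TE (T i))\<^sup>*\<^sup>* x x'" using x' u' unfolding T_def by blast
  qed
  have Tne: "T i \<noteq> {}" if i: "i \<in> I" for i
  proof -
    obtain v where "v \<in> C i" using CS i by blast
    moreover then have "v \<in> S" using CS i by blast
    ultimately show ?thesis using cov unfolding T_def by blast
  qed
  have Tint: "T i \<inter> T j \<noteq> {}" if ij: "i \<in> I" "j \<in> I" for i j
  proof (cases "i = j")
    case True then show ?thesis using Tne ij by auto
  next
    case False
    then obtain u v where "u \<in> C i" "v \<in> C j" "E u v" using touch ij by blast
    moreover then have "u \<in> S" "v \<in> S" using CS ij by blast+
    ultimately obtain z where "z \<in> N" "u \<in> B z" "v \<in> B z" using edg by blast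
    then show ?thesis unfolding T_def using \<open>u \<in> C i\<close> \<open>v \<in> C j\<close> by blast
  qed
  have TN: "T i \<subseteq> N" for i unfolding T_def by blast
  have h1: "\<forall>i\<in>I. T i \<subseteq> N \<and> T i \<noteq> {} \<and> connected_on TE (T i)"
    using Tconn Tne TN by blast
  have h2: "\<forall>i\<in>I. \<forall>j\<in>I. T i \<inter> T j \<noteq> {}" using Tint by blast
  obtain x where x: "x \<in> N" "\<forall>i\<in>I. x \<in> T i"
    using helly[OF finN neN gN cN acN h1 h2] by blast
  define g where "g = (\<lambda>i. SOME v. v \<in> B x \<inter> C i)"
  have gi: "g i \<in> B x \<inter> C i" if i: "i \<in> I" for i
  proof -
    have "x \<in> T i" using x i by blast
    then have "\<exists>v. v \<in> B x \<inter> C i" unfolding T_def by blast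
    then show ?thesis unfolding g_def by (rule someI_ex)
  qed
  have "inj_on g I"
  proof (rule inj_onI)
    fix i j assume "i \<in> I" "j \<in> I" "g i = g j"
    show "i = j"
    proof (rule ccontr)
      assume "i \<noteq> j"
      then have "C i \<inter> C j = {}" using disj \<open>i \<in> I\<close> \<open>j \<in> I\<close> by blast
      moreover have "g i \<in> C i" "g j \<in> C j" using gi \<open>i \<in> I\<close> \<open>j \<in> I\<close> by auto
      ultimately show False using \<open>g i = g j\<close> by auto
    qed
  qed
  moreover have "g ` I \<subseteq> B x" using gi by blast
  moreover have "finite (B x)" using BS x fin finite_subset by blast
  ultimately have "card I \<le> card (B x)" by (rule card_inj_on_le)
  then show ?thesis using bd x unfolding k_def by fastforce
qed



lemma layer_conn:
  assumes fin: "finite L" and irr: "\<forall>u\<in>L. \<not> lt u u"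
    and tr: "\<forall>u\<in>L. \<forall>v\<in>L. \<forall>w\<in>L. lt u v \<longrightarrow> lt v w \<longrightarrow> lt u w"
    and tot: "\<forall>u\<in>L. \<forall>v\<in>L. u = v \<or> lt u v \<or> lt v u"
    and adj: "\<forall>u\<in>L. \<forall>v\<in>L. E u v \<longleftrightarrow> consecutive lt L u v \<or> consecutive lt L v u"
  shows "connected_on E L"
proof -
  have main: "\<forall>u v. u \<in> L \<longrightarrow> v \<in> L \<longrightarrow> lt u v \<longrightarrow> card {w\<in>L. lt u w \<and> lt w v} = n
      \<longrightarrow> (cR E L)\<^sup>*\<^sup>* u v \<and> (cR E L)\<^sup>*\<^sup>* v u" for n
  proof (induction n rule: less_induct)
    case (less n)
    show ?case
    proof (intro allI impI)
      fix u v assume u: "u \<in> L" and v: "v \<in> L" and uv: "lt u v"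
        and cn: "card {w\<in>L. lt u w \<and> lt w v} = n"
      show "(cR E L)\<^sup>*\<^sup>* u v \<and> (cR E L)\<^sup>*\<^sup>* v u"
      proof (cases "\<exists>w\<in>L. lt u w \<and> lt w v")
        case False
        then have "consecutive lt L u v" using uv unfolding consecutive_def by blast
        then have "E u v" "E v u" using adj u v by blast+
        then show ?thesis using u v unfolding cR_def
          by (metis (mono_tags, lifting) r_into_rtranclp)
      next
        case True
        then obtain w where w: "w \<in> L" "lt u w" "lt w v" by blast
        have s1: "{x\<in>L. lt u x \<and> lt x w} \<subset> {x\<in>L. lt u x \<and> lt x v}"
        proof
          show "{x\<in>L. lt u x \<and> lt x w} \<subseteq> {x\<in>L. lt u x \<and> lt x v}"
            using tr w v by blast
          show "{x\<in>L. lt u x \<and> lt x w} \<noteq> {x\<in>L. lt u x \<and> lt x v}"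
            using w irr by blast
        qed
        have s2: "{x\<in>L. lt w x \<and> lt x v} \<subset> {x\<in>L. lt u x \<and> lt x v}"
        proof
          show "{x\<in>L. lt w x \<and> lt x v} \<subseteq> {x\<in>L. lt u x \<and> lt x v}"
            using tr w u by blast
          show "{x\<in>L. lt w x \<and> lt x v} \<noteq> {x\<in>L. lt u x \<and> lt x v}"
            using w irr by blast
        qed
        have f: "finite {x\<in>L. lt u x \<and> lt x v}" using fin by simp
        have c1: "card {x\<in>L. lt u x \<and> lt x w} < n" using psubset_card_mono[OF f s1] cn by simp
        have c2: "card {x\<in>L. lt w x \<and> lt x v} < n" using psubset_card_mono[OF f s2] cn by simp
        have "(cR E L)\<^sup>*\<^sup>* u w \<and> (cR E L)\<^sup>*\<^sup>* w u" using less.IH[OF c1] u w by blast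
        moreover have "(cR E L)\<^sup>*\<^sup>* w v \<and> (cR E L)\<^sup>*\<^sup>* v w" using less.IH[OF c2] v w by blast
        ultimately show ?thesis by (meson rtranclp_trans)
      qed
    qed
  qed
  show ?thesis unfolding conn_iff
  proof (intro ballI)
    fix u v assume "u \<in> L" "v \<in> L"
    then have "u = v \<or> lt u v \<or> lt v u" using tot by blast
    then show "(cR E L)\<^sup>*\<^sup>* u v" using main \<open>u \<in> L\<close> \<open>v \<in> L\<close> by blast
  qed
qed

lemma sub1_card: "finite A \<Longrightarrow> (\<forall>a\<in>A. \<forall>b\<in>A. a = b) \<Longrightarrow> card A \<le> 1"
  using card_le_Suc0_iff_eq by auto

lemma layer_deg:
  assumes fin: "finite L"
    and tot: "\<forall>u\<in>L. \<forall>v\<in>L. u = v \<or> lt u v \<or> lt v u"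
    and adj: "\<forall>u\<in>L. \<forall>v\<in>L. E u v \<longleftrightarrow> consecutive lt L u v \<or> consecutive lt L v u"
    and v: "v \<in> L"
  shows "card {w\<in>L. E v w} \<le> 2"
proof -
  define A where "A = {w\<in>L. consecutive lt L v w}"
  define B where "B = {w\<in>L. consecutive lt L w v}"
  have sub: "{w\<in>L. E v w} \<subseteq> A \<union> B" using adj v unfolding A_def B_def by blast
  have fA: "finite A" "finite B" using fin unfolding A_def B_def by auto
  have cA: "card A \<le> 1"
  proof (rule sub1_card[OF fA(1)], intro ballI)
    fix a b assume "a \<in> A" "b \<in> A"
    then have a: "a \<in> L" "lt v a" "\<not> (\<exists>x\<in>L. lt v x \<and> lt x a)"
      and b: "b \<in> L" "lt v b" "\<not> (\<exists>x\<in>L. lt v x \<and> lt x b)"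
      unfolding A_def consecutive_def by auto
    have "a = b \<or> lt a b \<or> lt b a" using tot a(1) b(1) by blast
    then show "a = b" using a b by blast
  qed
  have cB: "card B \<le> 1"
  proof (rule sub1_card[OF fA(2)], intro ballI)
    fix a b assume "a \<in> B" "b \<in> B"
    then have a: "a \<in> L" "lt a v" "\<not> (\<exists>x\<in>L. lt a x \<and> lt x v)"
      and b: "b \<in> L" "lt b v" "\<not> (\<exists>x\<in>L. lt b x \<and> lt x v)"
      unfolding B_def consecutive_def by auto
    have "a = b \<or> lt a b \<or> lt b a" using tot a(1) b(1) by blast
    then show "a = b" using a b by blast
  qed
  have "card {w\<in>L. E v w} \<le> card (A \<union> B)" using card_mono[OF _ sub] fA by blast
  also have "\<dots> \<le> card A + card B" by (rule card_Un_le)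
  finally show ?thesis using cA cB by linarith
qed

lemma common_nbr_unique:
  assumes g: "graph V E" and gi: "girth_at_least E 5" and uw: "u \<noteq> w"
  shows "finite {v. E v u \<and> E v w}"
proof -
  have "\<forall>a\<in>{v. E v u \<and> E v w}. \<forall>b\<in>{v. E v u \<and> E v w}. a = b"
  proof (intro ballI, rule ccontr)
    fix a b assume a: "a \<in> {v. E v u \<and> E v w}" and b: "b \<in> {v. E v u \<and> E v w}" and ab: "a \<noteq> b"
    have "is_cycle E [u, a, w, b]"
      using a b ab uw g unfolding is_cycle_def graph_def by auto
    then show False using gi unfolding girth_at_least_def by fastforce
  qed
  then show ?thesis
    by (metis (no_types, lifting) finite.emptyI finite_insert finite_subset insert_absorb subsetI insertI1 ex_in_conv singletonI insertCI)
qed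



lemma finite_sub1: "(\<forall>a\<in>A. \<forall>b\<in>A. a = b) \<Longrightarrow> finite A"
  by (metis finite.simps subsetI singletonI subset_singletonD)

lemma select:
  fixes L :: "nat \<Rightarrow> 'v set"
  assumes g: "graph V E" and gi: "girth_at_least E 5" and fin: "\<forall>n. finite (L n)"
    and disj: "\<forall>i j v. v \<in> L i \<longrightarrow> v \<in> L j \<longrightarrow> i = j"
  shows "\<exists>I. finite I \<and> card I = k \<and> (\<forall>i\<in>I. \<forall>v\<in>L i. \<forall>u w. u \<in> \<Union>(L ` {j\<in>I. j<i})
           \<longrightarrow> w \<in> \<Union>(L ` {j\<in>I. j<i}) \<longrightarrow> E v u \<longrightarrow> E v w \<longrightarrow> u = w)"
proof (induction k)
  case 0
  show ?case by (intro exI[of _ "{}"]) auto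
next
  case (Suc k)
  then obtain I where I: "finite I" "card I = k"
    and P: "\<forall>i\<in>I. \<forall>v\<in>L i. \<forall>u w. u \<in> \<Union>(L ` {j\<in>I. j<i})
           \<longrightarrow> w \<in> \<Union>(L ` {j\<in>I. j<i}) \<longrightarrow> E v u \<longrightarrow> E v w \<longrightarrow> u = w" by blast
  define F where "F = \<Union>(L ` I)"
  have finF: "finite F" unfolding F_def using I fin by blast
  define Bad where "Bad = {v. \<exists>u w. u \<in> F \<and> w \<in> F \<and> u \<noteq> w \<and> E v u \<and> E v w}"
  have "Bad \<subseteq> (\<Union>p\<in>{p\<in>F \<times> F. fst p \<noteq> snd p}. {v. E v (fst p) \<and> E v (snd p)})"
    unfolding Bad_def by force
  moreover have "finite (\<Union>p\<in>{p\<in>F \<times> F. fst p \<noteq> snd p}. {v. E v (fst p) \<and> E v (snd p)})"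
  proof (rule finite_UN_I)
    show "finite {p\<in>F \<times> F. fst p \<noteq> snd p}" using finF by simp
    show "\<And>p. p \<in> {p\<in>F \<times> F. fst p \<noteq> snd p} \<Longrightarrow> finite {v. E v (fst p) \<and> E v (snd p)}"
      using common_nbr_unique[OF g gi] by blast
  qed
  ultimately have finB: "finite Bad" by (rule finite_subset)
  define M where "M = (\<Union>v\<in>Bad. {n. v \<in> L n})"
  have finM: "finite M" unfolding M_def
  proof (rule finite_UN_I[OF finB])
    fix v show "finite {n. v \<in> L n}" using disj by (intro finite_sub1) blast
  qed
  obtain n where n: "M \<union> I \<subseteq> {..<n}" using finite_nat_bounded finM I(1) by (meson finite_UnI)
  have nI: "n \<notin> I" using n by auto
  define I' where "I' = insert n I"
  have "finite I'" "card I' = Suc k" using I nI unfolding I'_def by auto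
  moreover have "\<forall>i\<in>I'. \<forall>v\<in>L i. \<forall>u w. u \<in> \<Union>(L ` {j\<in>I'. j<i})
           \<longrightarrow> w \<in> \<Union>(L ` {j\<in>I'. j<i}) \<longrightarrow> E v u \<longrightarrow> E v w \<longrightarrow> u = w"
  proof (intro ballI allI impI)
    fix i v u w assume i: "i \<in> I'" and v: "v \<in> L i"
      and u: "u \<in> \<Union>(L ` {j\<in>I'. j<i})" and w: "w \<in> \<Union>(L ` {j\<in>I'. j<i})"
      and e: "E v u" "E v w"
    show "u = w"
    proof (cases "i = n")
      case True
      have "{j\<in>I'. j<i} \<subseteq> I" using True unfolding I'_def by auto
      then have uF: "u \<in> F" "w \<in> F" using u w unfolding F_def by blast+
      show ?thesis
      proof (rule ccontr)
        assume "u \<noteq> w"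
        then have "v \<in> Bad" using uF e unfolding Bad_def by blast
        then have "n \<in> M" using v True unfolding M_def by blast
        then show False using n by auto
      qed
    next
      case False
      then have iI: "i \<in> I" using i unfolding I'_def by auto
      then have "i < n" using n by auto
      then have "{j\<in>I'. j<i} = {j\<in>I. j<i}" unfolding I'_def by auto
      then show ?thesis using P iI v u w e by auto
    qed
  qed
  ultimately show ?case by blast
qed



theorem lemma5p3:
  fixes VH :: "'w set" and EH :: "'w \<Rightarrow> 'w \<Rightarrow> bool"
    and V :: "'v set" and E :: "'v \<Rightarrow> 'v \<Rightarrow> bool"
    and r :: 'v and par :: "'v \<Rightarrow> 'v" and lt :: "'v \<Rightarrow> 'v \<Rightarrow> bool"
    and t :: nat
  assumes "graph VH EH" and "finite VH" and "VH \<noteq> {}"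
    and "girth_at_least EH 5" and "min_degree_at_least VH EH 4"
    and "layered_wheel V E r par lt" and "proper_lw V E r par"
    and "girth_at_least E 5"
  shows "\<exists>S\<subseteq>V. finite S \<and> H_free VH EH S E \<and> t \<le> treewidth S E"
proof -
  define L where "L = layer V r par"
  note lw = assms(6)[unfolded layered_wheel_def]
  have g: "graph V E" using lw by (rule conjunct1)
  have po: "plane_order V r par lt"
    using lw[THEN conjunct2, THEN conjunct2, THEN conjunct2, THEN conjunct2, THEN conjunct2, THEN conjunct1] .
  have lay: "\<forall>n. finite (L n) \<and> (\<forall>u\<in>L n. \<forall>v\<in>L n. E u v \<longleftrightarrow> consecutive lt (L n) u v \<or> consecutive lt (L n) v u)"
    unfolding L_def
    using lw[THEN conjunct2, THEN conjunct2, THEN conjunct2, THEN conjunct2, THEN conjunct2, THEN conjunct2, THEN conjunct1] .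
  have lfin: "\<forall>n. finite (L n)" using lay by simp
  have ladj: "\<forall>n. \<forall>u\<in>L n. \<forall>v\<in>L n. E u v \<longleftrightarrow> consecutive lt (L n) u v \<or> consecutive lt (L n) v u"
    using lay by simp
  have pr: "\<forall>i j. i \<noteq> j \<longrightarrow> (\<exists>u\<in>L i. \<exists>v\<in>L j. E u v)"
    using assms(7) unfolding proper_lw_def L_def by blast
  have po': "\<forall>n. (\<forall>u\<in>L n. \<not> lt u u) \<and>
          (\<forall>u\<in>L n. \<forall>v\<in>L n. \<forall>w\<in>L n. lt u v \<longrightarrow> lt v w \<longrightarrow> lt u w) \<and>
          (\<forall>u\<in>L n. \<forall>v\<in>L n. u = v \<or> lt u v \<or> lt v u)"
    using po unfolding plane_order_def L_def by (rule conjunct1)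
  have irr: "\<forall>u\<in>L n. \<not> lt u u"
    and tr: "\<forall>u\<in>L n. \<forall>v\<in>L n. \<forall>w\<in>L n. lt u v \<longrightarrow> lt v w \<longrightarrow> lt u w"
    and tot: "\<forall>u\<in>L n. \<forall>v\<in>L n. u = v \<or> lt u v \<or> lt v u" for n
  proof -
    have h: "(\<forall>u\<in>L n. \<not> lt u u) \<and>
          (\<forall>u\<in>L n. \<forall>v\<in>L n. \<forall>w\<in>L n. lt u v \<longrightarrow> lt v w \<longrightarrow> lt u w) \<and>
          (\<forall>u\<in>L n. \<forall>v\<in>L n. u = v \<or> lt u v \<or> lt v u)" using po' by (rule spec)
    show "\<forall>u\<in>L n. \<not> lt u u" using h by (rule conjunct1)
    show "\<forall>u\<in>L n. \<forall>v\<in>L n. \<forall>w\<in>L n. lt u v \<longrightarrow> lt v w \<longrightarrow> lt u w"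
      using h[THEN conjunct2] by (rule conjunct1)
    show "\<forall>u\<in>L n. \<forall>v\<in>L n. u = v \<or> lt u v \<or> lt v u"
      using h[THEN conjunct2] by (rule conjunct2)
  qed
  have LV: "L n \<subseteq> V" for n unfolding L_def layer_def by auto
  have disj: "\<forall>i j v. v \<in> L i \<longrightarrow> v \<in> L j \<longrightarrow> i = j" unfolding L_def layer_def by auto
  have Lne: "L n \<noteq> {}" for n using pr[rule_format, of n "Suc n"] by auto
  have Lconn: "connected_on E (L n)" for n
    using layer_conn[OF lfin[THEN spec] irr tr tot ladj[THEN spec]] .
  obtain I where II: "finite I \<and> card I = Suc t \<and> (\<forall>i\<in>I. \<forall>v\<in>L i. \<forall>u w. u \<in> \<Union>(L ` {j\<in>I. j<i})
           \<longrightarrow> w \<in> \<Union>(L ` {j\<in>I. j<i}) \<longrightarrow> E v u \<longrightarrow> E v w \<longrightarrow> u = w)"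
    using select[OF g assms(8) lfin disj, of "Suc t"] by (elim exE)
  have I: "finite I" "card I = Suc t" using II by simp_all
  have P: "\<forall>i\<in>I. \<forall>v\<in>L i. \<forall>u w. u \<in> \<Union>(L ` {j\<in>I. j<i})
           \<longrightarrow> w \<in> \<Union>(L ` {j\<in>I. j<i}) \<longrightarrow> E v u \<longrightarrow> E v w \<longrightarrow> u = w"
    using II by (elim conjE)
  define S where "S = \<Union>(L ` I)"
  have SV: "S \<subseteq> V" unfolding S_def using LV by blast
  have finS: "finite S" unfolding S_def using I lfin by blast
  have tw: "card I \<le> treewidth S E + 1"
  proof (rule tw_lower[OF finS I(1)])
    show "\<forall>i\<in>I. L i \<subseteq> S \<and> L i \<noteq> {} \<and> connected_on E (L i)"
      unfolding S_def using Lne Lconn by blast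
    show "\<forall>i\<in>I. \<forall>j\<in>I. i \<noteq> j \<longrightarrow> L i \<inter> L j = {}" using disj by blast
    show "\<forall>i\<in>I. \<forall>j\<in>I. i \<noteq> j \<longrightarrow> (\<exists>u\<in>L i. \<exists>v\<in>L j. E u v)" using pr by blast
  qed
  have hf: "H_free VH EH S E"
    unfolding H_free_def induced_copy_def
  proof
    assume "\<exists>f. inj_on f VH \<and> f ` VH \<subseteq> S \<and> (\<forall>a\<in>VH. \<forall>b\<in>VH. EH a b \<longleftrightarrow> E (f a) (f b))"
    then obtain f where inj: "inj_on f VH" and fS: "f ` VH \<subseteq> S"
      and fE: "\<forall>a\<in>VH. \<forall>b\<in>VH. EH a b \<longleftrightarrow> E (f a) (f b)" by blast
    define D where "D = {i\<in>I. \<exists>a\<in>VH. f a \<in> L i}"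
    have finD: "finite D" using I unfolding D_def by auto
    obtain a0 where "a0 \<in> VH" using assms(3) by blast
    then obtain i0 where "i0 \<in> I" "f a0 \<in> L i0" using fS unfolding S_def by blast
    then have "i0 \<in> D" using \<open>a0 \<in> VH\<close> unfolding D_def by blast
    then have "D \<noteq> {}" by blast
    define d where "d = Max D"
    have "d \<in> D" unfolding d_def using finD \<open>D \<noteq> {}\<close> by simp
    then obtain a where a: "a \<in> VH" "f a \<in> L d" and dI: "d \<in> I" unfolding D_def by blast
    have dmax: "j \<le> d" if "j \<in> D" for j unfolding d_def using finD that by simp
    define NA where "NA = {b\<in>VH. EH a b}"
    have "4 \<le> card NA" using assms(5) a unfolding min_degree_at_least_def NA_def by blast
    define A1 where "A1 = {w\<in>L d. E (f a) w}"
    define A2 where "A2 = {w\<in>\<Union>(L ` {j\<in>I. j<d}). E (f a) w}"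
    have "f ` NA \<subseteq> A1 \<union> A2"
    proof
      fix x assume "x \<in> f ` NA"
      then obtain b where b: "b \<in> VH" "EH a b" "x = f b" unfolding NA_def by blast
      then have e: "E (f a) x" using fE a by blast
      obtain j where j: "j \<in> I" "f b \<in> L j" using fS b unfolding S_def by blast
      then have "j \<in> D" using b unfolding D_def by blast
      then have "j \<le> d" by (rule dmax)
      then show "x \<in> A1 \<union> A2"
      proof (cases "j = d")
        case True then show ?thesis using j e b unfolding A1_def by blast
      next
        case False then show ?thesis using j e b \<open>j \<le> d\<close> unfolding A2_def by auto
      qed
    qed
    have fA1: "finite A1" unfolding A1_def using lfin by auto
    have fA2: "finite A2" unfolding A2_def using lfin I by auto
    have c1: "card A1 \<le> 2" unfolding A1_def
      by (rule layer_deg[OF lfin[THEN spec] tot ladj[THEN spec] a(2)])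
    have c2: "card A2 \<le> 1"
    proof (rule sub1_card[OF fA2], intro ballI)
      fix u w assume "u \<in> A2" "w \<in> A2"
      then show "u = w" using P dI a(2) unfolding A2_def by blast
    qed
    have "card NA = card (f ` NA)"
      using inj unfolding NA_def by (simp add: card_image inj_on_subset)
    also have "\<dots> \<le> card (A1 \<union> A2)" using \<open>f ` NA \<subseteq> A1 \<union> A2\<close> fA1 fA2 by (simp add: card_mono)
    also have "\<dots> \<le> card A1 + card A2" by (rule card_Un_le)
    finally show False using c1 c2 \<open>4 \<le> card NA\<close> by linarith
  qed
  show ?thesis using SV finS hf tw I(2) by auto
qed


end
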